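(* Let $(M,d)$ be a homogeneous compact ultrametric space with no isolated points. (a) For every $r>0$, the optimal code of size $|\Pi(r)|$ in $(M,d)$ is unique up to isometry. (b) The symmetry strength of $(M,d)$ is infinite.
   Context: An ultrametric space satisfies $d(x,z)\leq\max(d(x,y),d(y,z))$. For $r>0$, $\Pi(r)$ is the (finite) partition of $M$ into open balls of radius $r$. Subsets $A,B\subseteq M$ are isometric if there is a bijection $f\colon A\to B$ with $d(f(x),f(y))=d(x,y)$; $M$ is homogeneous if every isometry between finite subsets extends to an isometry of $M$ onto itself. $x$ is isolated if some ball around $x$ contains only $x$. An optimal code of size $n$ is an $n$-element subset maximizing the minimum distance between distinct points; unique up to isometry means any two are related by an isometry of $M$. The symmetry strength of $M$ with isometry group $G$ is the supremum of $t$ such that for every size-$t$ subset $T\subseteq M$ there is $g\in G\setminus\{\mathrm{id}\}$ with $gT=T$. *)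

theory Defs
  imports "HOL-Analysis.Analysis"
begin

text \<open>The whole metric space M is the type 'a (class metric_space), with distance dist.\<close>

definition ultrametric :: "('a::metric_space) itself \<Rightarrow> bool" where
  "ultrametric _ \<longleftrightarrow> (\<forall>x y z::'a. dist x z \<le> max (dist x y) (dist y z))"

definition isometry_of_space :: "('a::metric_space \<Rightarrow> 'a) \<Rightarrow> bool" where
  "isometry_of_space g \<longleftrightarrow> bij g \<and> (\<forall>x y. dist (g x) (g y) = dist x y)"

definition homogeneous :: "('a::metric_space) itself \<Rightarrow> bool" where
  "homogeneous _ \<longleftrightarrow>
     (\<forall>(A::'a set) B f. finite A \<and> finite B \<and> bij_betw f A B \<and>
        (\<forall>x\<in>A. \<forall>y\<in>A. dist (f x) (f y) = dist x y) \<longrightarrow>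
        (\<exists>g. isometry_of_space g \<and> (\<forall>x\<in>A. g x = f x)))"

definition isolated_point :: "'a::metric_space \<Rightarrow> bool" where
  "isolated_point x \<longleftrightarrow> (\<exists>e>0. ball x e = {x})"

definition ball_partition :: "real \<Rightarrow> ('a::metric_space) set set" where
  "ball_partition r = {ball x r | x. True}"

definition min_dist :: "('a::metric_space) set \<Rightarrow> real" where
  "min_dist C = Min {dist x y | x y. x \<in> C \<and> y \<in> C \<and> x \<noteq> y}"

definition is_optimal_code :: "nat \<Rightarrow> ('a::metric_space) set \<Rightarrow> bool" where
  "is_optimal_code n C \<longleftrightarrow> finite C \<and> card C = n \<and>
     (\<forall>C'::'a set. finite C' \<and> card C' = n \<longrightarrow> min_dist C' \<le> min_dist C)"

definition sym_admissible :: "('a::metric_space) itself \<Rightarrow> nat \<Rightarrow> bool" where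
  "sym_admissible _ t \<longleftrightarrow>
     (\<forall>T::'a set. finite T \<and> card T = t \<longrightarrow>
        (\<exists>g. isometry_of_space g \<and> g \<noteq> id \<and> g ` T = T))"

text \<open>Symmetry strength infinite: the set of admissible t has supremum infinity,
  i.e. is unbounded.\<close>
definition infinite_symmetry_strength :: "('a::metric_space) itself \<Rightarrow> bool" where
  "infinite_symmetry_strength X \<longleftrightarrow> \<not> bdd_above {t. sym_admissible X t}"

end

theory Submission
  imports Defs
begin

lemma um: "ultrametric TYPE('a::metric_space) \<Longrightarrow> dist (x::'a) z \<le> max (dist x y) (dist y z)"
  by (simp add: ultrametric_def)

lemma um_iso:
  assumes U: "ultrametric TYPE('a::metric_space)" and h: "dist (y::'a) z < dist x y"
  shows "dist x z = dist x y"
proof -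
  have 1: "dist x z \<le> max (dist x y) (dist y z)" using um[OF U] .
  have 2: "dist x y \<le> max (dist x z) (dist z y)" using um[OF U] .
  show ?thesis using 1 2 h by (auto simp: dist_commute split: if_splits)
qed

lemma um_ball_eq:
  assumes U: "ultrametric TYPE('a::metric_space)" and h: "dist (x::'a) y < r"
  shows "ball x r = ball y r"
proof -
  have "z \<in> ball y r" if "z \<in> ball x r" for z
    using that um[OF U, of y z x] h by (auto simp: dist_commute)
  moreover have "z \<in> ball x r" if "z \<in> ball y r" for z
    using that um[OF U, of x z y] h by (auto simp: dist_commute)
  ultimately show ?thesis by blast
qed

lemma ball_eq_iff:
  assumes U: "ultrametric TYPE('a::metric_space)" and r: "r > 0"
  shows "ball (x::'a) r = ball y r \<longleftrightarrow> dist x y < r"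
proof
  assume "ball x r = ball y r"
  moreover have "y \<in> ball y r" using r by simp
  ultimately have "y \<in> ball x r" by simp
  then show "dist x y < r" by simp
qed (rule um_ball_eq[OF U])

lemma close_iso:
  assumes U: "ultrametric TYPE('a::metric_space)"
    and "dist (x::'a) a < r" "dist x' a' < r" "r \<le> dist x x'"
  shows "dist a a' = dist x x'"
proof -
  have "dist x' a = dist x' x" using um_iso[OF U, of x a x'] assms by (simp add: dist_commute)
  then have e1: "dist a x' = dist x x'" by (simp add: dist_commute)
  have "dist a a' = dist a x'" using um_iso[OF U, of x' a' a] assms e1 by (simp add: dist_commute)
  then show ?thesis using e1 by simp
qed

lemma finite_partition:
  assumes U: "ultrametric TYPE('a::metric_space)" and K: "compact (UNIV :: 'a set)" and r: "r > 0"
  shows "finite (ball_partition r :: 'a set set)"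
proof -
  obtain k :: "'a set" where k: "finite k" "UNIV \<subseteq> (\<Union>x\<in>k. ball x r)"
    using seq_compact_imp_totally_bounded[OF compact_imp_seq_compact[OF K]] r by blast
  have "ball_partition r \<subseteq> (\<lambda>x. ball x r) ` k"
  proof
    fix B :: "'a set" assume "B \<in> ball_partition r"
    then obtain x where B: "B = ball x r" by (auto simp: ball_partition_def)
    obtain y where "y \<in> k" "x \<in> ball y r" using k by blast
    then show "B \<in> (\<lambda>x. ball x r) ` k" using B um_ball_eq[OF U, of x y r] by (auto simp: dist_commute)
  qed
  then show ?thesis using k finite_subset by blast
qed

lemma homE:
  assumes "homogeneous TYPE('a::metric_space)" "finite (A::'a set)" "finite B" "bij_betw f A B"
    "\<forall>x\<in>A. \<forall>y\<in>A. dist (f x) (f y) = dist x y"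
  shows "\<exists>g. isometry_of_space g \<and> (\<forall>x\<in>A. g x = f x)"
proof -
  have "\<forall>(A::'a set) B f. finite A \<and> finite B \<and> bij_betw f A B \<and>
        (\<forall>x\<in>A. \<forall>y\<in>A. dist (f x) (f y) = dist x y) \<longrightarrow>
        (\<exists>g. isometry_of_space g \<and> (\<forall>x\<in>A. g x = f x))"
    using assms(1) unfolding homogeneous_def by assumption
  then have "finite A \<and> finite B \<and> bij_betw f A B \<and>
        (\<forall>x\<in>A. \<forall>y\<in>A. dist (f x) (f y) = dist x y) \<longrightarrow>
        (\<exists>g. isometry_of_space g \<and> (\<forall>x\<in>A. g x = f x))" by blast
  then show ?thesis using assms(2-5) by blast
qed

definition transv :: "real \<Rightarrow> ('a::metric_space) set \<Rightarrow> bool" where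
  "transv r C \<longleftrightarrow> finite C \<and> card C = card (ball_partition r :: 'a set set) \<and>
     (\<forall>x\<in>C. \<forall>y\<in>C. x \<noteq> y \<longrightarrow> r \<le> dist x y)"

lemma transv_bij:
  assumes U: "ultrametric TYPE('a::metric_space)" and K: "compact (UNIV :: 'a set)" and r: "r > 0"
    and T: "transv r (C::'a set)"
  shows "bij_betw (\<lambda>x. ball x r) C (ball_partition r)"
proof -
  have inj: "inj_on (\<lambda>x. ball x r) C"
    using T ball_eq_iff[OF U r] by (force simp: transv_def inj_on_def)
  have sub: "(\<lambda>x. ball x r) ` C \<subseteq> ball_partition r" by (auto simp: ball_partition_def)
  have "card ((\<lambda>x. ball x r) ` C) = card (ball_partition r :: 'a set set)"
    using card_image[OF inj] T by (simp add: transv_def)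
  then have "(\<lambda>x. ball x r) ` C = ball_partition r"
    using card_subset_eq[OF finite_partition[OF U K r] sub] by simp
  then show ?thesis using inj by (simp add: bij_betw_def)
qed

lemma transv_iso:
  assumes U: "ultrametric TYPE('a::metric_space)" and K: "compact (UNIV :: 'a set)" and r: "r > 0"
    and H: "homogeneous TYPE('a)"
    and T: "transv r (C::'a set)" and T': "transv r C'"
  shows "\<exists>g. isometry_of_space g \<and> g ` C = C'"
proof -
  define b where "b = (\<lambda>x::'a. ball x r)"
  define f where "f = inv_into C' b \<circ> b"
  have bC: "bij_betw b C (ball_partition r)" using transv_bij[OF U K r T] by (simp add: b_def)
  have bC': "bij_betw b C' (ball_partition r)" using transv_bij[OF U K r T'] by (simp add: b_def)
  have fb: "bij_betw f C C'" unfolding f_def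
    by (rule bij_betw_trans[OF bC bij_betw_inv_into[OF bC']])
  have close: "dist x (f x) < r" if "x \<in> C" for x
  proof -
    have "b x \<in> b ` C'" using bC bC' that by (auto simp: bij_betw_def)
    then have "b (f x) = b x" unfolding f_def by (simp add: f_inv_into_f)
    then show ?thesis using ball_eq_iff[OF U r] by (simp add: b_def dist_commute)
  qed
  have iso: "\<forall>x\<in>C. \<forall>y\<in>C. dist (f x) (f y) = dist x y"
  proof (intro ballI)
    fix x y assume xy: "x \<in> C" "y \<in> C"
    show "dist (f x) (f y) = dist x y"
    proof (cases "x = y")
      case False
      then have "r \<le> dist x y" using T xy by (auto simp: transv_def)
      then show ?thesis using close_iso[OF U close[OF xy(1)] close[OF xy(2)]] by simp
    qed simp
  qed
  have fin: "finite C" "finite C'" using T T' by (auto simp: transv_def)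
  obtain g where g: "isometry_of_space g" "\<forall>x\<in>C. g x = f x"
    using homE[OF H fin fb iso] by blast
  have "g ` C = f ` C" using g(2) by auto
  also have "\<dots> = C'" using fb by (simp add: bij_betw_def)
  finally show ?thesis using g(1) by blast
qed

definition dset :: "('a::metric_space) set \<Rightarrow> real set" where
  "dset C = {dist x y | x y. x \<in> C \<and> y \<in> C \<and> x \<noteq> y}"

lemma dset_finite: "finite C \<Longrightarrow> finite (dset C)"
proof -
  assume "finite C"
  moreover have "dset C \<subseteq> (\<lambda>(x,y). dist x y) ` (C \<times> C)" by (auto simp: dset_def)
  ultimately show ?thesis by (meson finite_SigmaI finite_imageI finite_subset)
qed

lemma min_dist_le: "finite C \<Longrightarrow> x \<in> C \<Longrightarrow> y \<in> C \<Longrightarrow> x \<noteq> y \<Longrightarrow> min_dist C \<le> dist x y"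
  unfolding min_dist_def using dset_finite[of C] by (intro Min_le) (auto simp: dset_def)

lemma min_dist_ge:
  assumes "finite C" "x \<in> C" "y \<in> C" "x \<noteq> y" "\<forall>a\<in>C. \<forall>b\<in>C. a \<noteq> b \<longrightarrow> r \<le> dist a b"
  shows "r \<le> min_dist C"
  unfolding min_dist_def using dset_finite[of C] assms
  by (subst Min_ge_iff) (auto simp: dset_def)

lemma two_elems:
  assumes "finite C" "2 \<le> card C"
  shows "\<exists>x\<in>C. \<exists>y\<in>C. x \<noteq> y"
proof -
  have "C \<noteq> {}" using assms by auto
  then obtain x where x: "x \<in> C" by blast
  have "card (C - {x}) \<ge> 1" using assms x by simp
  then have "C - {x} \<noteq> {}" by (metis card.empty not_one_le_zero)
  then obtain y where "y \<in> C - {x}" by blast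
  then show ?thesis using x by blast
qed

lemma card2: "finite C \<Longrightarrow> x \<in> C \<Longrightarrow> y \<in> C \<Longrightarrow> x \<noteq> y \<Longrightarrow> 2 \<le> card C"
proof -
  assume a: "finite C" "x \<in> C" "y \<in> C" "x \<noteq> y"
  have "card {x, y} \<le> card C" using a by (intro card_mono) auto
  then show ?thesis using a by simp
qed

lemma transv_exists:
  assumes U: "ultrametric TYPE('a::metric_space)" and K: "compact (UNIV :: 'a set)" and r: "r > 0"
  shows "\<exists>C::'a set. transv r C"
proof -
  define P where "P = (ball_partition r :: 'a set set)"
  define rep where "rep = (\<lambda>B::'a set. SOME x. B = ball x r)"
  have rep: "B = ball (rep B) r" if "B \<in> P" for B
  proof -
    have "\<exists>x. B = ball x r" using that by (auto simp: P_def ball_partition_def)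
    then show ?thesis unfolding rep_def by (rule someI_ex)
  qed
  have inj: "inj_on rep P" by (metis inj_onI rep)
  have finP: "finite P" using finite_partition[OF U K r] by (simp add: P_def)
  have "transv r (rep ` P)" unfolding transv_def
  proof (intro conjI ballI impI)
    show "finite (rep ` P)" using finP by simp
    show "card (rep ` P) = card (ball_partition r :: 'a set set)" using card_image[OF inj] P_def by simp
  next
    fix x y assume "x \<in> rep ` P" "y \<in> rep ` P" "x \<noteq> y"
    then obtain B B' where "B \<in> P" "B' \<in> P" "x = rep B" "y = rep B'" "B \<noteq> B'" by blast
    then have "ball x r \<noteq> ball y r" using rep by metis
    then show "r \<le> dist x y" using ball_eq_iff[OF U r] by (meson not_less)
  qed
  then show ?thesis by blast
qed

lemma transv_optimal:
  assumes U: "ultrametric TYPE('a::metric_space)" and K: "compact (UNIV :: 'a set)" and r: "r > 0"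
    and H: "homogeneous TYPE('a)" and T: "transv r (C::'a set)"
  shows "is_optimal_code (card (ball_partition r :: 'a set set)) C"
  unfolding is_optimal_code_def
proof (intro conjI allI impI)
  show "finite C" "card C = card (ball_partition r :: 'a set set)" using T by (auto simp: transv_def)
  fix C' :: "'a set" assume C': "finite C' \<and> card C' = card (ball_partition r :: 'a set set)"
  show "min_dist C' \<le> min_dist C"
  proof (cases "transv r C'")
    case True
    obtain g where g: "isometry_of_space g" "g ` C' = C" using transv_iso[OF U K r H True T] by blast
    have inj: "inj g" and gd: "\<And>x y. dist (g x) (g y) = dist x y"
      using g(1) by (auto simp: isometry_of_space_def bij_def)
    have "dset C = dset C'"
    proof
      show "dset C \<subseteq> dset C'"
      proof
        fix d assume "d \<in> dset C"
        then obtain x y where "x \<in> C" "y \<in> C" "x \<noteq> y" "d = dist x y" by (auto simp: dset_def)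
        then obtain x1 y1 where "x1 \<in> C'" "y1 \<in> C'" "x = g x1" "y = g y1" using g(2) by blast
        then show "d \<in> dset C'" using \<open>x \<noteq> y\<close> \<open>d = dist x y\<close> gd by (auto simp: dset_def)
      qed
    next
      show "dset C' \<subseteq> dset C"
      proof
        fix d assume "d \<in> dset C'"
        then obtain x y where "x \<in> C'" "y \<in> C'" "x \<noteq> y" "d = dist x y" by (auto simp: dset_def)
        then have "g x \<in> C" "g y \<in> C" "g x \<noteq> g y" "d = dist (g x) (g y)"
          using g(2) inj gd by (auto simp: inj_eq)
        then show "d \<in> dset C" by (auto simp: dset_def)
      qed
    qed
    then show ?thesis by (simp add: min_dist_def dset_def)
  next
    case False
    then obtain x y where xy: "x \<in> C'" "y \<in> C'" "x \<noteq> y" "dist x y < r"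
      using C' by (auto simp: transv_def not_le)
    have "2 \<le> card C" using card2[OF _ xy(1-3)] C' T by (simp add: transv_def)
    then obtain a b where ab: "a \<in> C" "b \<in> C" "a \<noteq> b" using two_elems T by (meson transv_def)
    have "r \<le> min_dist C" using min_dist_ge[OF _ ab] T by (simp add: transv_def)
    moreover have "min_dist C' \<le> dist x y" using min_dist_le xy C' by blast
    ultimately show ?thesis using xy(4) by linarith
  qed
qed

lemma optimal_transv:
  assumes U: "ultrametric TYPE('a::metric_space)" and K: "compact (UNIV :: 'a set)" and r: "r > 0"
    and O: "is_optimal_code (card (ball_partition r :: 'a set set)) (C::'a set)"
  shows "transv r C"
proof (rule ccontr)
  assume nt: "\<not> transv r C"
  then obtain x y where xy: "x \<in> C" "y \<in> C" "x \<noteq> y" "dist x y < r"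
    using O by (auto simp: transv_def is_optimal_code_def not_le)
  obtain C0 :: "'a set" where T0: "transv r C0" using transv_exists[OF U K r] by blast
  have fin: "finite C" using O by (simp add: is_optimal_code_def)
  have "2 \<le> card C0" using card2[OF fin xy(1-3)] O T0 by (simp add: transv_def is_optimal_code_def)
  then obtain a b where ab: "a \<in> C0" "b \<in> C0" "a \<noteq> b" using two_elems T0 by (meson transv_def)
  have "r \<le> min_dist C0" using min_dist_ge[OF _ ab] T0 by (simp add: transv_def)
  moreover have "min_dist C0 \<le> min_dist C" using O T0 by (simp add: is_optimal_code_def transv_def)
  moreover have "min_dist C \<le> dist x y" using min_dist_le fin xy by blast
  ultimately show False using xy(4) by linarith
qed

lemma sym_all:
  assumes U: "ultrametric TYPE('a::metric_space)" and H: "homogeneous TYPE('a)"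
    and NI: "\<forall>x::'a. \<not> isolated_point x" and T: "finite (T::'a set)"
  shows "\<exists>g. isometry_of_space g \<and> g \<noteq> id \<and> g ` T = T"
proof -
  obtain x :: 'a where x: "T \<noteq> {} \<longrightarrow> x \<in> T" by blast
  define T' where "T' = insert x T"
  have fT': "finite T'" using T by (simp add: T'_def)
  define eps where "eps = Min (insert 1 ((\<lambda>w. dist x w) ` (T' - {x})))"
  have eps_pos: "eps > 0" unfolding eps_def using fT' by (subst Min_gr_iff) auto
  have eps_le: "eps \<le> dist x w" if "w \<in> T'" "w \<noteq> x" for w
    unfolding eps_def using fT' that by (intro Min_le) auto
  have "ball x eps \<noteq> {x}" using NI eps_pos by (auto simp: isolated_point_def)
  moreover have "x \<in> ball x eps" using eps_pos by simp
  ultimately obtain y where y: "y \<in> ball x eps" "y \<noteq> x" by blast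
  define del where "del = dist x y"
  have del_pos: "del > 0" using y by (simp add: del_def)
  have "ball y del \<noteq> {y}" using NI del_pos by (auto simp: isolated_point_def)
  moreover have "y \<in> ball y del" using del_pos by simp
  ultimately obtain z where z: "z \<in> ball y del" "z \<noteq> y" by blast
  have dyz: "dist y z < dist x y" using z by (simp add: del_def)
  have dxz: "dist x z = dist x y" using um_iso[OF U dyz] .
  have dxy: "dist x y < eps" using y by simp
  have wy: "dist w y = dist w x" if "w \<in> T'" "w \<noteq> x" for w
    using um_iso[OF U, of x y w] dxy eps_le[OF that] by (simp add: dist_commute)
  have wz: "dist w z = dist w x" if "w \<in> T'" "w \<noteq> x" for w
    using um_iso[OF U, of x z w] dxy dxz eps_le[OF that] by (simp add: dist_commute)
  have yT: "y \<notin> T'"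
  proof
    assume "y \<in> T'" then show False using eps_le[of y] y dxy by simp
  qed
  have zT: "z \<notin> T'"
  proof
    assume "z \<in> T'"
    moreover have "z \<noteq> x" using dxz del_pos del_def by auto
    ultimately show False using eps_le[of z] dxz dxy by simp
  qed
  define A where "A = T' \<union> {y, z}"
  define f where "f = (\<lambda>w. if w = y then z else if w = z then y else w)"
  have fA: "finite A" using fT' by (simp add: A_def)
  have fbij: "bij_betw f A A"
  proof -
    have "f \<circ> f = id" by (auto simp: f_def)
    moreover have "f ` A \<subseteq> A" by (auto simp: f_def A_def)
    ultimately show ?thesis by (metis bij_betw_byWitness comp_apply id_apply)
  qed
  have fiso: "\<forall>a\<in>A. \<forall>b\<in>A. dist (f a) (f b) = dist a b"
  proof (intro ballI)
    fix a b assume ab: "a \<in> A" "b \<in> A"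
    have yx: "y \<noteq> x" "z \<noteq> x" "y \<noteq> z" using yT zT z by (auto simp: T'_def)
    have xz': "dist z x = dist y x" using dxz by (simp add: dist_commute)
    have wy': "dist y w = dist z w" if "w \<in> T'" for w
    proof (cases "w = x")
      case True then show ?thesis using xz' by simp
    next
      case False then show ?thesis using wy[OF that False] wz[OF that False] by (simp add: dist_commute)
    qed
    show "dist (f a) (f b) = dist a b"
      using ab yT zT yx wy'[of a] wy'[of b] unfolding A_def f_def
      by (auto simp: dist_commute)
  qed
  obtain g where g: "isometry_of_space g" "\<forall>a\<in>A. g a = f a"
    using homE[OF H fA fA fbij fiso] by blast
  have "g y = z" using g(2) by (simp add: A_def f_def)
  then have "g \<noteq> id" using z by auto
  moreover have "g ` T = T"
  proof -
    have "\<forall>w\<in>T. g w = w" using g(2) yT zT by (auto simp: A_def T'_def f_def)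
    then show ?thesis by (simp add: image_cong)
  qed
  ultimately show ?thesis using g(1) by blast
qed

theorem lemma4p18:
  assumes "ultrametric TYPE('a::metric_space)"
    and "compact (UNIV :: 'a set)"
    and "homogeneous TYPE('a)"
    and "\<forall>x::'a. \<not> isolated_point x"
  shows "(\<forall>r>0. (\<exists>C::'a set. is_optimal_code (card (ball_partition r :: 'a set set)) C) \<and>
            (\<forall>C C'::'a set. is_optimal_code (card (ball_partition r :: 'a set set)) C \<and>
                is_optimal_code (card (ball_partition r :: 'a set set)) C' \<longrightarrow>
                (\<exists>g. isometry_of_space g \<and> g ` C = C')))
         \<and> infinite_symmetry_strength TYPE('a)"
proof (intro conjI allI impI)
  fix r :: real assume r: "r > 0"
  show "\<exists>C::'a set. is_optimal_code (card (ball_partition r :: 'a set set)) C"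
    using transv_exists[OF assms(1,2) r] transv_optimal[OF assms(1,2) r assms(3)] by blast
  fix C C' :: "'a set"
  assume "is_optimal_code (card (ball_partition r :: 'a set set)) C \<and>
          is_optimal_code (card (ball_partition r :: 'a set set)) C'"
  then show "\<exists>g. isometry_of_space g \<and> g ` C = C'"
    using transv_iso[OF assms(1,2) r assms(3)] optimal_transv[OF assms(1,2) r] by blast
next
  have "{t. sym_admissible TYPE('a) t} = UNIV"
    using sym_all[OF assms(1,3,4)] by (auto simp: sym_admissible_def)
  then show "infinite_symmetry_strength TYPE('a)"
    by (simp add: infinite_symmetry_strength_def bdd_above_def) (metis Suc_n_not_le_n)
qed

end
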